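(* For every $\varepsilon>0$ and $n,d\in\mathbb{N}$, there exists an $\varepsilon$-$\nabla_0$DP algorithm for discrete distribution estimation over $\{0,1\}^d$ whose $\ell_2^2$ error is $\tilde O\!\left(\frac{\log d}{\varepsilon n}+\frac1n\right)$ with probability at least $0.9$, for every unknown distribution $\theta$.
   Context: Discrete distribution estimation: an unknown distribution $\theta=(\theta_x)_{x\in\{0,1\}^d}$ on $\{0,1\}^d$; the algorithm receives i.i.d. samples $x_1,\dots,x_n\sim\theta$ and outputs $\theta^{priv}\in[0,1]^{\{0,1\}^d}$; its $\ell_2^2$ error is $\sum_{x\in\{0,1\}^d}(\theta^{priv}_x-\theta_x)^2$. $\tilde O$ hides polylogarithmic factors. $M$ is $\varepsilon$-$\nabla_0$DP if for all datasets $D,D'\in(\{0,1\}^d)^n$ differing only in entry $i$ and all measurable $S$, $\Pr[M(D)\in S]\le e^{\varepsilon\|D_i-D'_i\|_0}\Pr[M(D')\in S]$, with $\|\cdot\|_0$ the Hamming distance. *)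

theory Defs
  imports "HOL-Probability.Probability"
begin

definition cube :: "nat \<Rightarrow> bool list set" where
  "cube d = {x. length x = d}"

definition datasets :: "nat \<Rightarrow> nat \<Rightarrow> bool list list set" where
  "datasets n d = {D. length D = n \<and> set D \<subseteq> cube d}"

definition hamming :: "bool list \<Rightarrow> bool list \<Rightarrow> nat" where
  "hamming x y = card {j. j < length x \<and> x ! j \<noteq> y ! j}"

definition out_space :: "nat \<Rightarrow> (bool list \<Rightarrow> real) measure" where
  "out_space d = PiM (cube d) (\<lambda>_. restrict_space borel {0..1})"

definition is_mechanism :: "nat \<Rightarrow> nat \<Rightarrow> (bool list list \<Rightarrow> (bool list \<Rightarrow> real) measure) \<Rightarrow> bool" where
  "is_mechanism n d M \<longleftrightarrow>
     (\<forall>D \<in> datasets n d. prob_space (M D) \<and> sets (M D) = sets (out_space d))"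

definition grad0_DP :: "real \<Rightarrow> nat \<Rightarrow> nat \<Rightarrow> (bool list list \<Rightarrow> (bool list \<Rightarrow> real) measure) \<Rightarrow> bool" where
  "grad0_DP \<epsilon> n d M \<longleftrightarrow>
     (\<forall>D \<in> datasets n d. \<forall>D' \<in> datasets n d. \<forall>i < n.
        (\<forall>j < n. j \<noteq> i \<longrightarrow> D ! j = D' ! j) \<longrightarrow>
        (\<forall>S \<in> sets (out_space d).
           measure (M D) S \<le> exp (\<epsilon> * real (hamming (D ! i) (D' ! i))) * measure (M D') S))"

definition l2sq_error :: "nat \<Rightarrow> (bool list \<Rightarrow> real) \<Rightarrow> bool list pmf \<Rightarrow> real" where
  "l2sq_error d t \<theta> = (\<Sum>x\<in>cube d. (t x - pmf \<theta> x)^2)"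

definition success_prob ::
  "nat \<Rightarrow> nat \<Rightarrow> (bool list list \<Rightarrow> (bool list \<Rightarrow> real) measure) \<Rightarrow> bool list pmf \<Rightarrow> real \<Rightarrow> real" where
  "success_prob n d M \<theta> b =
     (\<Sum>D\<in>datasets n d. (\<Prod>i<n. pmf \<theta> (D ! i)) *
        measure (M D) {t \<in> space (M D). l2sq_error d t \<theta> \<le> b})"

end

theory Submission
  imports Defs
begin


lemma card_cube: "card (cube d) = 2 ^ d"
  unfolding cube_def using card_lists_length_eq[of "UNIV::bool set" d] by simp

lemma finite_cube: "finite (cube d)"
  unfolding cube_def using finite_lists_length_eq[of "UNIV::bool set" d] by simp

lemma space_out: "space (out_space d) = PiE (cube d) (\<lambda>_. {0..1})"
  unfolding out_space_def by (simp add: space_PiM)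

lemma comp_meas: "x \<in> cube d \<Longrightarrow> (\<lambda>t. t x) \<in> borel_measurable (out_space d)"
proof -
  assume x: "x \<in> cube d"
  have 1: "(\<lambda>t. t x) \<in> measurable (out_space d) (restrict_space borel {0..1::real})"
    unfolding out_space_def using measurable_component_singleton[OF x] .
  have 2: "(\<lambda>y. y) \<in> measurable (restrict_space borel {0..1::real}) borel"
    using measurable_restrict_space1[OF measurable_ident] by (simp add: id_def)
  show ?thesis using measurable_compose[OF 1 2] .
qed

lemma err_meas: "(\<lambda>t. l2sq_error d t \<theta>) \<in> borel_measurable (out_space d)"
  unfolding l2sq_error_def
proof (rule borel_measurable_sum)
  fix x assume x: "x \<in> cube d"
  show "(\<lambda>t. (t x - pmf \<theta> x)^2) \<in> borel_measurable (out_space d)"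
    using comp_meas[OF x] by (intro borel_measurable_power borel_measurable_diff) auto
qed

lemma err_set: "{t \<in> space (out_space d). l2sq_error d t \<theta> \<le> b} \<in> sets (out_space d)"
  using borel_measurable_le[OF err_meas borel_measurable_const] .



lemma finite_datasets: "finite (datasets n d)"
proof -
  have "datasets n d = {D. set D \<subseteq> cube d \<and> length D = n}" unfolding datasets_def by auto
  then show ?thesis using finite_lists_length_eq[OF finite_cube] by simp
qed

lemma datasets_0: "datasets 0 d = {[]}" unfolding datasets_def by auto

lemma datasets_Suc: "datasets (Suc n) d = (\<lambda>(a,D). a # D) ` (cube d \<times> datasets n d)"
  unfolding datasets_def
proof (rule set_eqI, rule iffI)
  fix D assume "D \<in> {D. length D = Suc n \<and> set D \<subseteq> cube d}"
  then obtain a D' where "D = a # D'" "length D' = n" "set (a # D') \<subseteq> cube d"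
    by (cases D) auto
  then show "D \<in> (\<lambda>(a,D). a # D) ` (cube d \<times> {D. length D = n \<and> set D \<subseteq> cube d})"
    by (auto intro!: image_eqI[where x="(a,D')"])
qed auto

lemma sum_prod_datasets:
  "(\<Sum>D\<in>datasets n d. \<Prod>k<n. f k (D!k)) = (\<Prod>k<n. \<Sum>a\<in>cube d. (f k a::real))"
proof (induction n arbitrary: f)
  case 0
  then show ?case by (simp add: datasets_0)
next
  case (Suc n)
  have inj: "inj_on (\<lambda>(a,D). a # D) (cube d \<times> datasets n d)" by (auto simp: inj_on_def)
  have "(\<Sum>D\<in>datasets (Suc n) d. \<Prod>k<Suc n. f k (D!k))
      = (\<Sum>(a,D)\<in>cube d \<times> datasets n d. \<Prod>k<Suc n. f k ((a#D)!k))"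
    unfolding datasets_Suc by (subst sum.reindex[OF inj]) (simp add: case_prod_unfold)
  also have "\<dots> = (\<Sum>(a,D)\<in>cube d \<times> datasets n d. f 0 a * (\<Prod>k<n. f (Suc k) (D!k)))"
    unfolding prod.lessThan_Suc_shift by simp
  also have "\<dots> = (\<Sum>a\<in>cube d. f 0 a) * (\<Sum>D\<in>datasets n d. \<Prod>k<n. f (Suc k) (D!k))"
    by (simp add: sum_product sum.cartesian_product)
  also have "\<dots> = (\<Sum>a\<in>cube d. f 0 a) * (\<Prod>k<n. \<Sum>a\<in>cube d. f (Suc k) a)"
    using Suc.IH[of "\<lambda>k. f (Suc k)"] by simp
  also have "\<dots> = (\<Prod>k<Suc n. \<Sum>a\<in>cube d. f k a)"
    unfolding prod.lessThan_Suc_shift by simp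
  finally show ?case .
qed

lemma sum_pmf_cube:
  assumes "set_pmf \<theta> \<subseteq> cube d"
  shows "(\<Sum>a\<in>cube d. pmf \<theta> a) = 1"
proof -
  have "measure_pmf.prob \<theta> (cube d) = 1"
    using assms by (subst measure_pmf.prob_eq_1) (auto intro!: AE_pmfI)
  then show ?thesis using measure_measure_pmf_finite[OF finite_cube] by simp
qed

definition Wd :: "nat \<Rightarrow> bool list pmf \<Rightarrow> bool list list \<Rightarrow> real" where
  "Wd n \<theta> D = (\<Prod>k<n. pmf \<theta> (D!k))"

lemma Wd_nonneg: "Wd n \<theta> D \<ge> 0" unfolding Wd_def by (simp add: prod_nonneg)

lemma sum_Wd:
  assumes "set_pmf \<theta> \<subseteq> cube d"
  shows "(\<Sum>D\<in>datasets n d. Wd n \<theta> D) = 1"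
  unfolding Wd_def using sum_prod_datasets[where n=n and d=d and f="\<lambda>k a. pmf \<theta> a"] sum_pmf_cube[OF assms] by simp

lemma E2:
  assumes "set_pmf \<theta> \<subseteq> cube d" "i < n" "j < n" "i \<noteq> j"
  shows "(\<Sum>D\<in>datasets n d. Wd n \<theta> D * (g (D!i) * h (D!j)))
       = (\<Sum>a\<in>cube d. pmf \<theta> a * g a) * (\<Sum>a\<in>cube d. pmf \<theta> a * h a)"
proof -
  define f where "f k a = pmf \<theta> a * (if k = i then g a else 1) * (if k = j then h a else 1)" for k a
  have 1: "(\<Prod>k<n. f k (D!k)) = Wd n \<theta> D * (g (D!i) * h (D!j))" for D
    unfolding f_def Wd_def prod.distrib using assms by simp
  have 2: "(\<Sum>a\<in>cube d. f k a) = (if k = i then (\<Sum>a\<in>cube d. pmf \<theta> a * g a) else 1) *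
       (if k = j then (\<Sum>a\<in>cube d. pmf \<theta> a * h a) else 1)" for k
    unfolding f_def using assms(4) sum_pmf_cube[OF assms(1)] by auto
  have 3: "(\<Prod>k<n. (if k = i then G else 1) * (if k = j then H else (1::real))) = G * H" for G H
    unfolding prod.distrib using assms by simp
  have 4: "(\<Sum>D\<in>datasets n d. \<Prod>k<n. f k (D!k)) = (\<Prod>k<n. \<Sum>a\<in>cube d. f k a)"
    by (rule sum_prod_datasets)
  show ?thesis
    using 4 by (simp only: 1 2 3)
qed

lemma E1:
  assumes "set_pmf \<theta> \<subseteq> cube d" "i < n"
  shows "(\<Sum>D\<in>datasets n d. Wd n \<theta> D * g (D!i)) = (\<Sum>a\<in>cube d. pmf \<theta> a * g a)"
proof -
  define f where "f k a = pmf \<theta> a * (if k = i then g a else 1)" for k a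
  have 1: "(\<Prod>k<n. f k (D!k)) = Wd n \<theta> D * g (D!i)" for D
    unfolding f_def Wd_def prod.distrib using assms by simp
  have 2: "(\<Sum>a\<in>cube d. f k a) = (if k = i then (\<Sum>a\<in>cube d. pmf \<theta> a * g a) else 1)" for k
    unfolding f_def using sum_pmf_cube[OF assms(1)] by auto
  have 3: "(\<Prod>k<n. (if k = i then G else (1::real))) = G" for G
    using assms by simp
  have 4: "(\<Sum>D\<in>datasets n d. \<Prod>k<n. f k (D!k)) = (\<Prod>k<n. \<Sum>a\<in>cube d. f k a)"
    by (rule sum_prod_datasets)
  show ?thesis
    using 4 by (simp only: 1 2 3)
qed



definition phat :: "nat \<Rightarrow> bool list list \<Rightarrow> bool list \<Rightarrow> real" where
  "phat n D x = (\<Sum>k<n. if D!k = x then 1 else 0) / real n"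

definition stat :: "nat \<Rightarrow> nat \<Rightarrow> bool list pmf \<Rightarrow> bool list list \<Rightarrow> real" where
  "stat n d \<theta> D = (\<Sum>x\<in>cube d. (phat n D x - pmf \<theta> x)^2)"

lemma stat_one:
  assumes th: "set_pmf \<theta> \<subseteq> cube d" and n: "n \<ge> 1" and x: "x \<in> cube d"
  shows "(\<Sum>D\<in>datasets n d. Wd n \<theta> D * (phat n D x - pmf \<theta> x)^2) \<le> pmf \<theta> x / n"
proof -
  define Y where "Y a = (if a = x then 1 else 0) - pmf \<theta> x" for a
  have s1: "(\<Sum>a\<in>cube d. pmf \<theta> a * (if a = x then 1 else 0)) = pmf \<theta> x"
    using x finite_cube by (simp add: if_distrib cong: if_cong)
  have sY: "(\<Sum>a\<in>cube d. pmf \<theta> a * Y a) = 0"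
    unfolding Y_def right_diff_distrib sum_subtractf s1 sum_distrib_right[symmetric] sum_pmf_cube[OF th] by simp
  have sY2: "(\<Sum>a\<in>cube d. pmf \<theta> a * (Y a * Y a)) = pmf \<theta> x - (pmf \<theta> x)^2"
  proof -
    have "pmf \<theta> a * (Y a * Y a) = pmf \<theta> a * (if a = x then 1 else 0) * (1 - 2 * pmf \<theta> x) + pmf \<theta> a * (pmf \<theta> x)^2" for a
      unfolding Y_def by (simp add: power2_eq_square algebra_simps)
    then have "(\<Sum>a\<in>cube d. pmf \<theta> a * (Y a * Y a)) =
       (\<Sum>a\<in>cube d. pmf \<theta> a * (if a = x then 1 else 0)) * (1 - 2 * pmf \<theta> x) + (\<Sum>a\<in>cube d. pmf \<theta> a) * (pmf \<theta> x)^2"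
      by (simp only: sum.distrib sum_distrib_right)
    then show ?thesis unfolding s1 sum_pmf_cube[OF th] by (simp add: power2_eq_square algebra_simps)
  qed
  have ph: "phat n D x - pmf \<theta> x = (\<Sum>k<n. Y (D!k)) / n" for D
    unfolding phat_def Y_def sum_subtractf using n by (simp add: field_simps)
  have sq: "(phat n D x - pmf \<theta> x)^2 = (\<Sum>k<n. \<Sum>l<n. Y (D!k) * Y (D!l)) / n^2" for D
    unfolding ph power_divide by (simp add: power2_eq_square sum_product)
  have "(\<Sum>D\<in>datasets n d. Wd n \<theta> D * (phat n D x - pmf \<theta> x)^2)
      = (\<Sum>k<n. \<Sum>l<n. \<Sum>D\<in>datasets n d. Wd n \<theta> D * (Y (D!k) * Y (D!l))) / n^2"
    unfolding sq by (simp add: sum_divide_distrib sum_distrib_left sum.swap[of _ "datasets n d"] mult.assoc)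
  also have "\<dots> = (\<Sum>k<n. \<Sum>l<n. if k = l then pmf \<theta> x - (pmf \<theta> x)^2 else 0) / n^2"
  proof -
    have "(\<Sum>D\<in>datasets n d. Wd n \<theta> D * (Y (D!k) * Y (D!l))) = (if k = l then pmf \<theta> x - (pmf \<theta> x)^2 else 0)"
      if "k < n" "l < n" for k l
    proof (cases "k = l")
      case True
      then show ?thesis using E1[OF th \<open>k<n\<close>, of "\<lambda>a. Y a * Y a"] sY2 by simp
    next
      case False
      then show ?thesis using E2[OF th \<open>k<n\<close> \<open>l<n\<close> False, of Y Y] sY by simp
    qed
    then show ?thesis by (intro arg_cong[where f="\<lambda>t. t / _"] sum.cong) auto
  qed
  also have "\<dots> = n * (pmf \<theta> x - (pmf \<theta> x)^2) / n^2"
    by simp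
  also have "\<dots> \<le> n * pmf \<theta> x / n^2"
    by (intro divide_right_mono mult_left_mono) auto
  also have "\<dots> = pmf \<theta> x / n" using n by (simp add: power2_eq_square)
  finally show ?thesis .
qed

lemma stat_exp:
  assumes th: "set_pmf \<theta> \<subseteq> cube d" and n: "n \<ge> 1"
  shows "(\<Sum>D\<in>datasets n d. Wd n \<theta> D * stat n d \<theta> D) \<le> 1 / n"
proof -
  have "(\<Sum>D\<in>datasets n d. Wd n \<theta> D * stat n d \<theta> D)
     = (\<Sum>x\<in>cube d. \<Sum>D\<in>datasets n d. Wd n \<theta> D * (phat n D x - pmf \<theta> x)^2)"
    unfolding stat_def by (simp add: sum_distrib_left sum.swap[of _ "cube d"])
  also have "\<dots> \<le> (\<Sum>x\<in>cube d. pmf \<theta> x / n)"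
    by (intro sum_mono stat_one[OF th n])
  also have "\<dots> = 1 / n" using sum_pmf_cube[OF th] by (simp add: sum_divide_distrib[symmetric])
  finally show ?thesis .
qed

lemma stat_markov:
  assumes th: "set_pmf \<theta> \<subseteq> cube d" and n: "n \<ge> 1"
  shows "(\<Sum>D\<in>{D\<in>datasets n d. stat n d \<theta> D \<le> 20 / n}. Wd n \<theta> D) \<ge> 19/20"
proof -
  let ?B = "{D\<in>datasets n d. \<not> stat n d \<theta> D \<le> 20 / n}"
  have "(\<Sum>D\<in>?B. Wd n \<theta> D) * (20 / n) \<le> (\<Sum>D\<in>?B. Wd n \<theta> D * stat n d \<theta> D)"
    unfolding sum_distrib_right by (intro sum_mono mult_left_mono) (auto simp: Wd_nonneg)
  also have "\<dots> \<le> (\<Sum>D\<in>datasets n d. Wd n \<theta> D * stat n d \<theta> D)"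
    by (intro sum_mono2 finite_datasets) (auto intro!: mult_nonneg_nonneg Wd_nonneg sum_nonneg simp: stat_def)
  also have "\<dots> \<le> 1 / n" by (rule stat_exp[OF th n])
  finally have "(\<Sum>D\<in>?B. Wd n \<theta> D) \<le> 1/20" using n by (simp add: field_simps)
  moreover have "(\<Sum>D\<in>?B. Wd n \<theta> D) + (\<Sum>D\<in>{D\<in>datasets n d. stat n d \<theta> D \<le> 20 / n}. Wd n \<theta> D) = 1"
  proof -
    have "datasets n d = ?B \<union> {D\<in>datasets n d. stat n d \<theta> D \<le> 20 / n}" by auto
    then have "(\<Sum>D\<in>datasets n d. Wd n \<theta> D) = (\<Sum>D\<in>?B. Wd n \<theta> D) + (\<Sum>D\<in>{D\<in>datasets n d. stat n d \<theta> D \<le> 20 / n}. Wd n \<theta> D)"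
      using finite_datasets[of n d] by (metis (no_types, lifting) sum.union_disjoint finite_Un disjoint_iff mem_Collect_eq)
    then show ?thesis using sum_Wd[OF th] by simp
  qed
  ultimately show ?thesis by linarith
qed



definition wt :: "real \<Rightarrow> nat \<Rightarrow> nat \<Rightarrow> real" where
  "wt a c m = exp (- a * \<bar>real m - real c\<bar>)"

definition Zn :: "real \<Rightarrow> nat \<Rightarrow> nat \<Rightarrow> real" where
  "Zn a n c = (\<Sum>m\<le>n. wt a c m)"

lemma Zn_pos: "Zn a n c > 0"
  unfolding Zn_def wt_def by (intro sum_pos) auto

definition expm :: "real \<Rightarrow> nat \<Rightarrow> nat \<Rightarrow> nat pmf" where
  "expm a n c = embed_pmf (\<lambda>m. if m \<le> n then wt a c m / Zn a n c else 0)"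

lemma pmf_expm: "pmf (expm a n c) m = (if m \<le> n then wt a c m / Zn a n c else 0)"
  unfolding expm_def
proof (rule pmf_embed_pmf)
  show "\<And>x. 0 \<le> (if x \<le> n then wt a c x / Zn a n c else 0)"
    using Zn_pos[of a n c] by (auto simp: wt_def)
  have "(\<integral>\<^sup>+ x. ennreal (if x \<le> n then wt a c x / Zn a n c else 0) \<partial>count_space UNIV)
      = (\<Sum>x\<in>{..n}. ennreal (if x \<le> n then wt a c x / Zn a n c else 0))"
    by (rule nn_integral_count_space') auto
  also have "\<dots> = ennreal (\<Sum>x\<in>{..n}. wt a c x / Zn a n c)"
    using Zn_pos[of a n c] by (subst sum_ennreal[symmetric]) (auto simp: wt_def)
  also have "(\<Sum>x\<in>{..n}. wt a c x / Zn a n c) = 1"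
    using Zn_pos[of a n c] unfolding sum_divide_distrib[symmetric] Zn_def by simp
  finally show "(\<integral>\<^sup>+ x. ennreal (if x \<le> n then wt a c x / Zn a n c else 0) \<partial>count_space UNIV) = 1"
    by simp
qed

lemma wt_ratio:
  assumes "a \<ge> 0"
  shows "wt a c m \<le> exp (a * \<bar>real c - real c'\<bar>) * wt a c' m"
proof -
  have "- a * \<bar>real m - real c\<bar> \<le> a * \<bar>real c - real c'\<bar> + - a * \<bar>real m - real c'\<bar>"
  proof -
    have "\<bar>real m - real c'\<bar> \<le> \<bar>real m - real c\<bar> + \<bar>real c - real c'\<bar>" by linarith
    then have "a * \<bar>real m - real c'\<bar> \<le> a * \<bar>real m - real c\<bar> + a * \<bar>real c - real c'\<bar>"
      using assms by (metis distrib_left mult_left_mono)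
    then show ?thesis by linarith
  qed
  then show ?thesis unfolding wt_def by (simp add: exp_add[symmetric])
qed

lemma expm_ratio:
  assumes "a \<ge> 0"
  shows "pmf (expm a n c) m \<le> exp (2 * a * \<bar>real c - real c'\<bar>) * pmf (expm a n c') m"
proof (cases "m \<le> n")
  case True
  let ?E = "exp (a * \<bar>real c - real c'\<bar>)"
  have Z: "Zn a n c' \<le> ?E * Zn a n c"
    unfolding Zn_def sum_distrib_left
    by (intro sum_mono) (metis wt_ratio[OF assms] abs_minus_commute)
  have "wt a c m / Zn a n c \<le> ?E * wt a c' m / Zn a n c"
    using wt_ratio[OF assms, of c m c'] Zn_pos[of a n c] by (simp add: divide_right_mono)
  also have "\<dots> \<le> ?E * wt a c' m / (Zn a n c' / ?E)"
    using Zn_pos[of a n c'] Zn_pos[of a n c] Z by (intro divide_left_mono) (auto simp: wt_def field_simps)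
  also have "\<dots> = (?E * ?E) * (wt a c' m / Zn a n c')" by simp
  also have "?E * ?E = exp (2 * a * \<bar>real c - real c'\<bar>)" by (simp add: exp_add[symmetric])
  finally show ?thesis using True by (simp add: pmf_expm)
qed (simp add: pmf_expm)

lemma expm_tail:
  assumes "a \<ge> 0" "c \<le> n"
  shows "measure_pmf.prob (expm a n c) {m. r \<le> \<bar>real m - real c\<bar>} \<le> (n+1) * exp (- a * r)"
proof -
  have Z: "Zn a n c \<ge> 1"
  proof -
    have "wt a c c \<le> Zn a n c" unfolding Zn_def using assms
      by (intro member_le_sum) (auto simp: wt_def)
    then show ?thesis by (simp add: wt_def)
  qed
  let ?A = "{m. r \<le> \<bar>real m - real c\<bar>}"
  let ?B = "{m\<in>{..n}. r \<le> \<bar>real m - real c\<bar>}"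
  have sp: "set_pmf (expm a n c) \<subseteq> {..n}"
    by (auto simp: set_pmf_iff pmf_expm split: if_splits)
  have "measure_pmf.prob (expm a n c) ?A = measure_pmf.prob (expm a n c) (?A \<inter> set_pmf (expm a n c))"
    by (simp add: measure_Int_set_pmf)
  also have "\<dots> \<le> measure_pmf.prob (expm a n c) ?B"
    using sp by (intro measure_pmf.finite_measure_mono) auto
  also have "\<dots> = (\<Sum>m\<in>?B. pmf (expm a n c) m)"
    by (rule measure_measure_pmf_finite) auto
  also have "\<dots> \<le> (\<Sum>m\<in>?B. exp (- a * r))"
  proof (rule sum_mono)
    fix m assume m: "m \<in> ?B"
    have "wt a c m \<le> exp (- a * r)"
      unfolding wt_def using m assms(1) by (auto intro: mult_left_mono)
    also have "\<dots> \<le> exp (- a * r) * Zn a n c" using Z by simp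
    finally show "pmf (expm a n c) m \<le> exp (- a * r)"
      using m Zn_pos[of a n c] by (simp add: pmf_expm divide_le_eq)
  qed
  also have "\<dots> = card ?B * exp (- a * r)" by simp
  also have "\<dots> \<le> (real n+1) * exp (- a * r)"
  proof -
    have "card ?B \<le> card {..n}" by (intro card_mono) auto
    then show ?thesis by (intro mult_right_mono) auto
  qed
  finally show ?thesis .
qed


function nodes :: "nat \<Rightarrow> nat \<Rightarrow> (nat \<times> nat) set" where
  "nodes a b = (if b - a \<le> 1 then {(a,b)}
     else insert (a,b) (nodes a ((a+b) div 2) \<union> nodes ((a+b) div 2) b))"
  by pat_completeness auto
termination by (relation "Wellfounded.measure (\<lambda>(a,b). b - a)") auto

declare nodes.simps[simp del]

lemma finite_nodes: "finite (nodes a b)"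
  by (induction a b rule: nodes.induct) (subst nodes.simps, auto)

lemma nodes_bounds: "v \<in> nodes a b \<Longrightarrow> a < b \<Longrightarrow> a \<le> fst v \<and> fst v < snd v \<and> snd v \<le> b"
proof (induction a b rule: nodes.induct)
  case (1 a b)
  show ?case
  proof (cases "b - a \<le> 1")
    case True
    then show ?thesis using 1(3,4) by (subst (asm) nodes.simps) auto
  next
    case False
    let ?m = "(a+b) div 2"
    have m: "a < ?m" "?m < b" using False by auto
    from 1(3) False have "v = (a,b) \<or> v \<in> nodes a ?m \<or> v \<in> nodes ?m b"
      by (subst (asm) nodes.simps) auto
    then show ?thesis using 1(1)[OF False] 1(2)[OF False] m 1(4) by fastforce
  qed
qed

lemma card_nodes: "a < b \<Longrightarrow> card (nodes a b) \<le> 2 * (b - a) - 1"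
proof (induction a b rule: nodes.induct)
  case (1 a b)
  show ?case
  proof (cases "b - a \<le> 1")
    case True
    then show ?thesis using 1(3) by (subst nodes.simps) auto
  next
    case False
    let ?m = "(a+b) div 2"
    have m: "a < ?m" "?m < b" using False by auto
    have "card (nodes a b) = card (insert (a,b) (nodes a ?m \<union> nodes ?m b))"
      using False by (subst nodes.simps) auto
    also have "\<dots> \<le> Suc (card (nodes a ?m \<union> nodes ?m b))"
      by (rule card_insert_le_m1) (auto simp: finite_nodes)
    also have "\<dots> \<le> Suc (card (nodes a ?m) + card (nodes ?m b))"
      using card_Un_le by simp
    also have "\<dots> \<le> Suc ((2 * (?m - a) - 1) + (2 * (b - ?m) - 1))"
      using 1(1)[OF False m(1)] 1(2)[OF False m(2)] by simp
    also have "\<dots> = 2 * (b - a) - 1" using m by simp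
    finally show ?thesis .
  qed
qed

lemma depth_nodes: "a < b \<Longrightarrow> b - a \<le> 2^k \<Longrightarrow> card {v \<in> nodes a b. fst v \<le> j \<and> j < snd v} \<le> k + 1"
proof (induction a b arbitrary: k rule: nodes.induct)
  case (1 a b)
  show ?case
  proof (cases "b - a \<le> 1")
    case True
    then have "{v \<in> nodes a b. fst v \<le> j \<and> j < snd v} \<subseteq> {(a,b)}" by (subst nodes.simps) auto
    then have "card {v \<in> nodes a b. fst v \<le> j \<and> j < snd v} \<le> card {(a,b)}"
      by (intro card_mono) auto
    then show ?thesis by simp
  next
    case False
    let ?m = "(a+b) div 2"
    let ?S = "\<lambda>a b. {v \<in> nodes a b. fst v \<le> j \<and> j < snd v}"
    have m: "a < ?m" "?m < b" using False by auto
    have k: "k \<ge> 1" using False 1(4) by (cases k) auto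
    have lm: "?m - a \<le> 2^(k-1)" "b - ?m \<le> 2^(k-1)"
    proof -
      have "(2::nat)^k = 2 * 2^(k-1)" using k by (cases k) auto
      then show "?m - a \<le> 2^(k-1)" "b - ?m \<le> 2^(k-1)" using 1(4) by auto
    qed
    have eq: "?S a b \<subseteq> insert (a,b) (?S a ?m \<union> ?S ?m b)"
      using False by (subst nodes.simps) auto
    have "?S a ?m = {} \<or> ?S ?m b = {}"
    proof (cases "j < ?m")
      case True
      then show ?thesis using nodes_bounds[of _ ?m b] m(2) by force
    next
      case False
      then show ?thesis using nodes_bounds[of _ a ?m] m(1) by force
    qed
    then have "card (?S a ?m \<union> ?S ?m b) \<le> k"
    proof
      assume e: "?S a ?m = {}"
      show ?thesis unfolding e Un_empty_left using 1(2)[OF False m(2) lm(2)] k by simp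
    next
      assume e: "?S ?m b = {}"
      show ?thesis unfolding e Un_empty_right using 1(1)[OF False m(1) lm(1)] k by simp
    qed
    then have "card (insert (a,b) (?S a ?m \<union> ?S ?m b)) \<le> k + 1"
    proof -
      have "finite (?S a ?m \<union> ?S ?m b)" by (simp add: finite_nodes)
      then have "card (insert (a,b) (?S a ?m \<union> ?S ?m b)) \<le> Suc (card (?S a ?m \<union> ?S ?m b))"
        by (simp add: card_insert_if)
      then show ?thesis using \<open>card (?S a ?m \<union> ?S ?m b) \<le> k\<close> by simp
    qed
    moreover have "card (?S a b) \<le> card (insert (a,b) (?S a ?m \<union> ?S ?m b))"
      by (rule card_mono[OF _ eq]) (auto simp: finite_nodes)
    ultimately show ?thesis by linarith
  qed
qed

definition blk :: "nat \<times> nat \<Rightarrow> bool list \<Rightarrow> bool list" where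
  "blk v x = take (snd v - fst v) (drop (fst v) x)"

lemma blk_split: "a \<le> m \<Longrightarrow> m \<le> b \<Longrightarrow> blk (a,b) x = blk (a,m) x @ blk (m,b) x"
proof -
  assume "a \<le> m" "m \<le> b"
  then have e: "b - a = (m - a) + (b - m)" by simp
  have "take (b - a) (drop a x) = take ((m - a) + (b - m)) (drop a x)" by (simp only: e)
  also have "\<dots> = take (m - a) (drop a x) @ take (b - m) (drop (m - a) (drop a x))"
    by (rule take_add)
  also have "drop (m - a) (drop a x) = drop m x" using \<open>a \<le> m\<close> by simp
  finally show ?thesis unfolding blk_def by simp
qed

lemma length_blk: "b \<le> length x \<Longrightarrow> length (blk (a,b) x) = b - a"
  unfolding blk_def by simp

lemma blk_root: "length x = d \<Longrightarrow> blk (0,d) x = x"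
  unfolding blk_def by simp



type_synonym cell = "(nat \<times> nat) \<times> bool list"

definition cnt :: "nat \<Rightarrow> bool list list \<Rightarrow> nat \<times> nat \<Rightarrow> bool list \<Rightarrow> nat" where
  "cnt n D v u = (\<Sum>k<n. if blk v (D!k) = u then 1 else 0)"

function surv :: "(cell \<Rightarrow> nat) \<Rightarrow> real \<Rightarrow> nat \<Rightarrow> nat \<Rightarrow> bool list set" where
  "surv N T a b = (if b - a \<le> 1 then {u \<in> cube (b-a). T \<le> real (N ((a,b),u))}
     else {u1 @ u2 | u1 u2. u1 \<in> surv N T a ((a+b) div 2) \<and> u2 \<in> surv N T ((a+b) div 2) b
              \<and> T \<le> real (N ((a,b), u1 @ u2))})"
  by pat_completeness auto
termination by (relation "Wellfounded.measure (\<lambda>(N,T,a,b). b - a)") auto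

declare surv.simps[simp del]

definition Qs :: "nat \<Rightarrow> bool list list \<Rightarrow> nat \<times> nat \<Rightarrow> bool list set" where
  "Qs n D v = {u. 0 < cnt n D v u}"

definition cand :: "nat \<Rightarrow> bool list list \<Rightarrow> nat \<times> nat \<Rightarrow> bool list set" where
  "cand n D v = (if snd v - fst v \<le> 1 then cube (snd v - fst v)
     else {u1 @ u2 | u1 u2. u1 \<in> Qs n D (fst v, (fst v + snd v) div 2) \<and> u2 \<in> Qs n D ((fst v + snd v) div 2, snd v)})"

definition good :: "nat \<Rightarrow> bool list list \<Rightarrow> real \<Rightarrow> (cell \<Rightarrow> nat) \<Rightarrow> nat \<Rightarrow> nat \<Rightarrow> bool" where
  "good n D r N a b \<longleftrightarrow> (\<forall>v \<in> nodes a b. \<forall>u \<in> cand n D v. \<bar>real (N (v,u)) - real (cnt n D v u)\<bar> < r)"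

lemma datasets_nth: "D \<in> datasets n d \<Longrightarrow> k < n \<Longrightarrow> D!k \<in> cube d"
  unfolding datasets_def by auto

lemma datasets_len: "D \<in> datasets n d \<Longrightarrow> k < n \<Longrightarrow> length (D!k) = d"
  using datasets_nth unfolding cube_def by auto

lemma cnt_le: "cnt n D v u \<le> n"
proof -
  have "cnt n D v u \<le> (\<Sum>k<n. 1)" unfolding cnt_def by (intro sum_mono) auto
  then show ?thesis by simp
qed

lemma cnt_mono:
  assumes D: "D \<in> datasets n d" and "a \<le> m" "m \<le> b" "b \<le> d"
  shows "cnt n D (a,b) u \<le> cnt n D (a,m) (take (m-a) u)"
        "cnt n D (a,b) u \<le> cnt n D (m,b) (drop (m-a) u)"
proof -
  have h: "blk (a,m) (D!k) = take (m-a) u \<and> blk (m,b) (D!k) = drop (m-a) u"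
    if "k < n" "blk (a,b) (D!k) = u" for k
  proof -
    have l: "length (blk (a,m) (D!k)) = m - a"
      using datasets_len[OF D that(1)] assms by (intro length_blk) auto
    have "u = blk (a,m) (D!k) @ blk (m,b) (D!k)" using that(2) blk_split assms by metis
    then show ?thesis using l by simp
  qed
  show "cnt n D (a,b) u \<le> cnt n D (a,m) (take (m-a) u)"
    unfolding cnt_def by (intro sum_mono) (use h in auto)
  show "cnt n D (a,b) u \<le> cnt n D (m,b) (drop (m-a) u)"
    unfolding cnt_def by (intro sum_mono) (use h in auto)
qed

lemma nodes_self: "(a,b) \<in> nodes a b"
  by (subst nodes.simps) auto

lemma nodes_children: "\<not> b - a \<le> 1 \<Longrightarrow> nodes a ((a+b) div 2) \<subseteq> nodes a b \<and> nodes ((a+b) div 2) b \<subseteq> nodes a b"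
proof -
  assume h: "\<not> b - a \<le> 1"
  have "nodes a b = insert (a,b) (nodes a ((a+b) div 2) \<union> nodes ((a+b) div 2) b)"
    using h by (simp only: nodes.simps[of a b] if_False)
  then show ?thesis by blast
qed

lemma good_sub:
  assumes "good n D r N a b" "\<not> b - a \<le> 1"
  shows "good n D r N a ((a+b) div 2)" "good n D r N ((a+b) div 2) b"
        "\<forall>u \<in> cand n D (a,b). \<bar>real (N ((a,b),u)) - real (cnt n D (a,b) u)\<bar> < r"
  using assms nodes_self[of a b] nodes_children[OF assms(2)] unfolding good_def by blast+

lemma good_leaf:
  assumes "good n D r N a b"
  shows "\<forall>u \<in> cand n D (a,b). \<bar>real (N ((a,b),u)) - real (cnt n D (a,b) u)\<bar> < r"
  using assms nodes_self[of a b] unfolding good_def by blast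

lemma surv_props:
  assumes D: "D \<in> datasets n d" and "a < b" "b \<le> d" "r > 0" "good n D r N a b"
  shows "(\<forall>u \<in> surv N (2*r) a b. r < real (cnt n D (a,b) u) \<and> \<bar>real (N ((a,b),u)) - real (cnt n D (a,b) u)\<bar> < r)
       \<and> (\<forall>u. length u = b - a \<longrightarrow> 3*r \<le> real (cnt n D (a,b) u) \<longrightarrow> u \<in> surv N (2*r) a b)"
  using assms(2-5)
proof (induction a b rule: nodes.induct)
  case (1 a b)
  show ?case
  proof (cases "b - a \<le> 1")
    case True
    have G: "\<forall>u \<in> cube (b-a). \<bar>real (N ((a,b),u)) - real (cnt n D (a,b) u)\<bar> < r"
      using good_leaf[OF 1(6)] True unfolding cand_def by simp
    have S: "surv N (2*r) a b = {u \<in> cube (b-a). 2*r \<le> real (N ((a,b),u))}"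
      using True by (subst surv.simps) simp
    show ?thesis
    proof (intro conjI ballI allI impI)
      fix u assume "u \<in> surv N (2*r) a b"
      then have u: "u \<in> cube (b-a)" "2*r \<le> real (N ((a,b),u))" unfolding S by auto
      show "r < real (cnt n D (a,b) u)" "\<bar>real (N ((a,b),u)) - real (cnt n D (a,b) u)\<bar> < r"
        using G u by force+
    next
      fix u :: "bool list" assume "length u = b - a" "3*r \<le> real (cnt n D (a,b) u)"
      then show "u \<in> surv N (2*r) a b" unfolding S using G by (force simp: cube_def)
    qed
  next
    case False
    let ?m = "(a+b) div 2"
    have m: "a < ?m" "?m < b" using False by auto
    note IH1 = "1.IH"(1)[OF False m(1) _ 1(5) good_sub(1)[OF 1(6) False]]
    note IH2 = "1.IH"(2)[OF False m(2) _ 1(5) good_sub(2)[OF 1(6) False]]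
    have IH1': "\<forall>u\<in>surv N (2 * r) a ?m. r < real (cnt n D (a, ?m) u)"
      "\<forall>u. length u = ?m - a \<longrightarrow> 3 * r \<le> real (cnt n D (a, ?m) u) \<longrightarrow> u \<in> surv N (2 * r) a ?m"
      using IH1 1(4) m by auto
    have IH2': "\<forall>u\<in>surv N (2 * r) ?m b. r < real (cnt n D (?m, b) u)"
      "\<forall>u. length u = b - ?m \<longrightarrow> 3 * r \<le> real (cnt n D (?m, b) u) \<longrightarrow> u \<in> surv N (2 * r) ?m b"
      using IH2 1(4) m by auto
    have G: "\<forall>u \<in> cand n D (a,b). \<bar>real (N ((a,b),u)) - real (cnt n D (a,b) u)\<bar> < r"
      using good_sub(3)[OF 1(6) False] .
    have C: "cand n D (a,b) = {u1 @ u2 | u1 u2. u1 \<in> Qs n D (a,?m) \<and> u2 \<in> Qs n D (?m,b)}"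
      using False unfolding cand_def by simp
    have S: "surv N (2*r) a b = {u1 @ u2 | u1 u2. u1 \<in> surv N (2*r) a ?m \<and> u2 \<in> surv N (2*r) ?m b
              \<and> 2*r \<le> real (N ((a,b), u1 @ u2))}"
      using False by (subst surv.simps) simp
    show ?thesis
    proof (intro conjI ballI allI impI)
      fix u assume "u \<in> surv N (2*r) a b"
      then obtain u1 u2 where u: "u = u1 @ u2" "u1 \<in> surv N (2*r) a ?m" "u2 \<in> surv N (2*r) ?m b"
        "2*r \<le> real (N ((a,b), u))" unfolding S by auto
      have "u1 \<in> Qs n D (a,?m)" "u2 \<in> Qs n D (?m,b)"
        using IH1'(1) IH2'(1) u(2,3) 1(5) unfolding Qs_def by fastforce+
      then have "u \<in> cand n D (a,b)" unfolding C u(1) by blast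
      then have "\<bar>real (N ((a,b),u)) - real (cnt n D (a,b) u)\<bar> < r" using G by blast
      then show "r < real (cnt n D (a,b) u)" "\<bar>real (N ((a,b),u)) - real (cnt n D (a,b) u)\<bar> < r"
        using u(4) by linarith+
    next
      fix u :: "bool list" assume len: "length u = b - a" and c: "3*r \<le> real (cnt n D (a,b) u)"
      define u1 where "u1 = take (?m - a) u"
      define u2 where "u2 = drop (?m - a) u"
      have uu: "u = u1 @ u2" unfolding u1_def u2_def by simp
      have c1: "3*r \<le> real (cnt n D (a,?m) u1)" "3*r \<le> real (cnt n D (?m,b) u2)"
        using c cnt_mono[OF D, of a ?m b u] m 1(4) unfolding u1_def u2_def by auto
      have s1: "u1 \<in> surv N (2*r) a ?m" using IH1'(2) c1(1) len m unfolding u1_def by simp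
      have s2: "u2 \<in> surv N (2*r) ?m b" using IH2'(2) c1(2) len m unfolding u2_def by simp
      have "u1 \<in> Qs n D (a,?m)" "u2 \<in> Qs n D (?m,b)" using c1 1(5) unfolding Qs_def by auto
      then have "u \<in> cand n D (a,b)" unfolding C uu by blast
      then have "\<bar>real (N ((a,b),u)) - real (cnt n D (a,b) u)\<bar> < r" using G by blast
      then have "2*r \<le> real (N ((a,b), u))" using c by linarith
      then have "2*r \<le> real (N ((a,b), u1 @ u2))" using uu by simp
      then show "u \<in> surv N (2*r) a b" unfolding S uu using s1 s2 by blast
    qed
  qed
qed



definition post :: "nat \<Rightarrow> nat \<Rightarrow> real \<Rightarrow> (cell \<Rightarrow> nat) \<Rightarrow> bool list \<Rightarrow> real" where
  "post n d T N = (\<lambda>x. if x \<in> cube d then (if x \<in> surv N T 0 d then min 1 (real (N ((0,d),x)) / real n) else 0)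
                       else undefined)"

lemma post_space: "post n d T N \<in> space (out_space d)"
  unfolding space_out post_def by (auto simp: PiE_def extensional_def)

lemma blk_root_D: "D \<in> datasets n d \<Longrightarrow> k < n \<Longrightarrow> blk (0,d) (D!k) = D!k"
  using blk_root datasets_len by blast

lemma phat_cnt: "D \<in> datasets n d \<Longrightarrow> phat n D x = real (cnt n D (0,d) x) / real n"
  unfolding phat_def cnt_def
  by (auto intro!: arg_cong[where f="\<lambda>t. t / real n"] sum.cong simp: blk_root_D)

lemma sum_cnt_root:
  assumes D: "D \<in> datasets n d"
  shows "(\<Sum>x\<in>cube d. real (cnt n D (0,d) x)) = real n"
proof -
  have "(\<Sum>x\<in>cube d. real (cnt n D (0,d) x)) = (\<Sum>x\<in>cube d. \<Sum>k<n. if D!k = x then 1 else (0::real))"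
    unfolding cnt_def of_nat_sum 
    by (intro sum.cong refl) (auto simp: blk_root_D[OF D])
  also have "\<dots> = (\<Sum>k<n. \<Sum>x\<in>cube d. if D!k = x then 1 else (0::real))"
    by (rule sum.swap)
  also have "\<dots> = (\<Sum>k<n. 1)"
    using datasets_nth[OF D] finite_cube by (intro sum.cong refl) (simp add: sum.delta')
  finally show ?thesis by simp
qed

lemma min_clamp: "(q::real) \<le> 1 \<Longrightarrow> \<bar>min 1 p - q\<bar> \<le> \<bar>p - q\<bar>"
  by (cases "p \<le> 1") (auto simp: min_def)

lemma sq_tri: "((a::real) - c)^2 \<le> 2 * (a - b)^2 + 2 * (b - c)^2"
proof -
  have "2 * (a - b)^2 + 2 * (b - c)^2 - (a - c)^2 = (a - 2*b + c)^2"
    by (simp add: power2_eq_square algebra_simps)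
  moreover have "(a - 2*b + c)^2 \<ge> 0" by simp
  ultimately show ?thesis by linarith
qed

lemma err_post:
  assumes D: "D \<in> datasets n d" and n: "n \<ge> 1" and d: "d \<ge> 1" and r: "r > 0"
    and G: "good n D r N 0 d"
  shows "(\<Sum>x\<in>cube d. (post n d (2*r) N x - phat n D x)^2) \<le> 3 * r / n"
proof -
  note SP = surv_props[OF D _ order.refl r G] 
  have SP1: "\<forall>u \<in> surv N (2*r) 0 d. r < real (cnt n D (0,d) u) \<and> \<bar>real (N ((0,d),u)) - real (cnt n D (0,d) u)\<bar> < r"
    using SP d by simp
  have SP2: "\<forall>u. length u = d \<longrightarrow> 3*r \<le> real (cnt n D (0,d) u) \<longrightarrow> u \<in> surv N (2*r) 0 d"
    using SP d by simp
  have nn: "real n > 0" using n by simp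
  have tm: "(post n d (2*r) N x - phat n D x)^2 \<le> 3 * r * real (cnt n D (0,d) x) / (real n)^2"
    if x: "x \<in> cube d" for x
  proof -
    let ?c = "real (cnt n D (0,d) x)"
    have c0: "?c \<ge> 0" by simp
    have cn: "?c \<le> real n" using cnt_le by simp
    show ?thesis
    proof (cases "x \<in> surv N (2*r) 0 d")
      case True
      let ?N = "real (N ((0,d),x))"
      have 1: "r < ?c" "\<bar>?N - ?c\<bar> < r" using SP1 True by auto
      have p: "post n d (2*r) N x = min 1 (?N / n)" using x True unfolding post_def by simp
      have "?c / n \<le> 1" using cn nn by simp
      then have "\<bar>min 1 (?N / n) - ?c / n\<bar> \<le> \<bar>?N / n - ?c / n\<bar>" by (rule min_clamp)
      also have "\<dots> = \<bar>?N - ?c\<bar> / n" using nn by (simp add: diff_divide_distrib[symmetric])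
      finally have "\<bar>post n d (2*r) N x - phat n D x\<bar> \<le> \<bar>?N - ?c\<bar> / n"
        unfolding p phat_cnt[OF D] .
      then have "(post n d (2*r) N x - phat n D x)^2 \<le> (\<bar>?N - ?c\<bar> / n)^2"
        by (metis abs_ge_zero power2_abs power_mono)
      also have "\<dots> = \<bar>?N - ?c\<bar>^2 / (real n)^2" by (simp add: power_divide)
      also have "\<dots> \<le> (3 * r * ?c) / (real n)^2"
      proof (intro divide_right_mono)
        have "\<bar>?N - ?c\<bar>^2 \<le> r^2" using 1(2) by (intro power_mono) auto
        also have "r^2 \<le> 3 * r * ?c" using 1(1) r by (simp add: power2_eq_square)
        finally show "\<bar>?N - ?c\<bar>^2 \<le> 3 * r * ?c" .
      qed simp
      finally show ?thesis .
    next
      case False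
      have "length x = d" using x unfolding cube_def by simp
      then have "?c < 3 * r" using SP2 False by force
      have p: "post n d (2*r) N x = 0" using x False unfolding post_def by simp
      have "(post n d (2*r) N x - phat n D x)^2 = ?c * ?c / (real n)^2"
        unfolding p phat_cnt[OF D] by (simp add: power2_eq_square)
      also have "\<dots> \<le> 3 * r * ?c / (real n)^2"
        using \<open>?c < 3 * r\<close> c0 by (intro divide_right_mono) (auto intro: mult_right_mono)
      finally show ?thesis .
    qed
  qed
  have "(\<Sum>x\<in>cube d. (post n d (2*r) N x - phat n D x)^2) \<le> (\<Sum>x\<in>cube d. 3 * r * real (cnt n D (0,d) x) / (real n)^2)"
    by (intro sum_mono tm)
  also have "\<dots> = 3 * r * (\<Sum>x\<in>cube d. real (cnt n D (0,d) x)) / (real n)^2"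
    by (simp add: sum_divide_distrib[symmetric] sum_distrib_left)
  also have "\<dots> = 3 * r / n" unfolding sum_cnt_root[OF D] using nn by (simp add: power2_eq_square)
  finally show ?thesis .
qed

lemma err_total:
  assumes D: "D \<in> datasets n d" and n: "n \<ge> 1" and d: "d \<ge> 1" and r: "r > 0"
    and G: "good n D r N 0 d"
  shows "l2sq_error d (post n d (2*r) N) \<theta> \<le> 6 * r / n + 2 * stat n d \<theta> D"
proof -
  have "l2sq_error d (post n d (2*r) N) \<theta>
      \<le> (\<Sum>x\<in>cube d. 2 * (post n d (2*r) N x - phat n D x)^2 + 2 * (phat n D x - pmf \<theta> x)^2)"
    unfolding l2sq_error_def
  proof (intro sum_mono)
    fix x
    show "(post n d (2*r) N x - pmf \<theta> x)^2 \<le> 2 * (post n d (2*r) N x - phat n D x)^2 + 2 * (phat n D x - pmf \<theta> x)^2"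
      by (rule sq_tri)
  qed
  also have "\<dots> = 2 * (\<Sum>x\<in>cube d. (post n d (2*r) N x - phat n D x)^2) + 2 * stat n d \<theta> D"
    unfolding stat_def by (simp add: sum.distrib sum_distrib_left)
  also have "\<dots> \<le> 2 * (3 * r / n) + 2 * stat n d \<theta> D"
    using err_post[OF assms] by simp
  finally show ?thesis by simp
qed



definition cells :: "nat \<Rightarrow> cell set" where
  "cells d = Sigma (nodes 0 d) (\<lambda>v. cube (snd v - fst v))"

lemma finite_cells: "finite (cells d)"
  unfolding cells_def by (intro finite_SigmaI finite_nodes finite_cube)

definition noise :: "real \<Rightarrow> nat \<Rightarrow> nat \<Rightarrow> bool list list \<Rightarrow> (cell \<Rightarrow> nat) pmf" where
  "noise a n d D = Pi_pmf (cells d) 0 (\<lambda>c. expm a n (cnt n D (fst c) (snd c)))"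

lemma pmf_le_measure:
  assumes "\<And>x. pmf p x \<le> K * pmf q x"
  shows "measure_pmf.prob p A \<le> K * measure_pmf.prob q A"
proof -
  have "measure_pmf.prob p A = (\<integral>x. pmf p x \<partial>count_space A)" by (simp add: integral_pmf)
  also have "\<dots> \<le> (\<integral>x. K * pmf q x \<partial>count_space A)"
    by (intro integral_mono integrable_pmf integrable_mult_right assms)
  also have "\<dots> = K * measure_pmf.prob q A" by (simp add: integral_pmf)
  finally show ?thesis .
qed

lemma marginal_noise:
  assumes "c \<in> cells d"
  shows "measure_pmf.prob (noise a n d D) {N. P (N c)} = measure_pmf.prob (expm a n (cnt n D (fst c) (snd c))) {x. P x}"
proof -
  have "measure_pmf.prob (noise a n d D) {N. P (N c)} = measure_pmf.prob (map_pmf (\<lambda>N. N c) (noise a n d D)) {x. P x}"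
    by simp
  also have "map_pmf (\<lambda>N. N c) (noise a n d D) = expm a n (cnt n D (fst c) (snd c))"
    unfolding noise_def using Pi_pmf_component[OF finite_cells[of d], of c 0] assms by simp
  finally show ?thesis .
qed

lemma cnt_pos: "0 < cnt n D w u \<Longrightarrow> \<exists>k<n. blk w (D!k) = u"
proof (rule ccontr)
  assume "0 < cnt n D w u" "\<not> (\<exists>k<n. blk w (D!k) = u)"
  then have "cnt n D w u = 0" unfolding cnt_def by (intro sum.neutral) auto
  then show False using \<open>0 < cnt n D w u\<close> by simp
qed

lemma card_Qs: "card (Qs n D w) \<le> n"
proof -
  have "Qs n D w \<subseteq> (\<lambda>k. blk w (D!k)) ` {..<n}"
  proof
    fix u assume "u \<in> Qs n D w"
    then have "0 < cnt n D w u" unfolding Qs_def by simp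
    then obtain k where "k < n" "blk w (D!k) = u" using cnt_pos by blast
    then show "u \<in> (\<lambda>k. blk w (D!k)) ` {..<n}" by blast
  qed
  then have "card (Qs n D w) \<le> card ((\<lambda>k. blk w (D!k)) ` {..<n})" by (intro card_mono) auto
  also have "\<dots> \<le> n" using card_image_le[of "{..<n}"] by simp
  finally show ?thesis .
qed

lemma finite_Qs: "finite (Qs n D w)"
proof -
  have "Qs n D w \<subseteq> (\<lambda>k. blk w (D!k)) ` {..<n}"
  proof
    fix u assume "u \<in> Qs n D w"
    then have "0 < cnt n D w u" unfolding Qs_def by simp
    then obtain k where "k < n" "blk w (D!k) = u" using cnt_pos by blast
    then show "u \<in> (\<lambda>k. blk w (D!k)) ` {..<n}" by blast
  qed
  then show ?thesis by (rule finite_subset) auto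
qed

lemma Qs_len: "D \<in> datasets n d \<Longrightarrow> b \<le> d \<Longrightarrow> u \<in> Qs n D (a,b) \<Longrightarrow> length u = b - a"
proof -
  assume D: "D \<in> datasets n d" and b: "b \<le> d" and "u \<in> Qs n D (a,b)"
  then have "0 < cnt n D (a,b) u" unfolding Qs_def by simp
  then obtain k where "k < n" "blk (a,b) (D!k) = u" using cnt_pos by blast
  then show ?thesis using length_blk datasets_len[OF D] b by metis
qed

lemma cand_card:
  assumes "n \<ge> 1" "fst v < snd v"
  shows "card (cand n D v) \<le> 2 * n^2"
proof (cases "snd v - fst v \<le> 1")
  case True
  then have "snd v - fst v = 1" using assms by simp
  then have "card (cand n D v) = 2" unfolding cand_def using card_cube[of 1] by simp
  also have "2 \<le> 2 * n^2" using assms by simp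
  finally show ?thesis .
next
  case False
  let ?Q1 = "Qs n D (fst v, (fst v + snd v) div 2)" and ?Q2 = "Qs n D ((fst v + snd v) div 2, snd v)"
  have eq: "cand n D v = (\<lambda>(u1,u2). u1 @ u2) ` (?Q1 \<times> ?Q2)"
    unfolding cand_def using False by auto
  have "card (cand n D v) \<le> card (?Q1 \<times> ?Q2)" unfolding eq
    by (rule card_image_le) (simp add: finite_Qs)
  also have "\<dots> = card ?Q1 * card ?Q2" by (rule card_cartesian_product)
  also have "\<dots> \<le> n * n" by (intro mult_mono card_Qs) auto
  also have "\<dots> \<le> 2 * n^2" by (simp add: power2_eq_square)
  finally show ?thesis .
qed

lemma finite_cand: "finite (cand n D v)"
proof (cases "snd v - fst v \<le> 1")
  case True
  then show ?thesis unfolding cand_def by (simp add: finite_cube)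
next
  case False
  let ?Q1 = "Qs n D (fst v, (fst v + snd v) div 2)" and ?Q2 = "Qs n D ((fst v + snd v) div 2, snd v)"
  have eq: "cand n D v = (\<lambda>(u1,u2). u1 @ u2) ` (?Q1 \<times> ?Q2)"
    unfolding cand_def using False by auto
  show ?thesis unfolding eq by (intro finite_imageI finite_cartesian_product finite_Qs)
qed

lemma cand_cells:
  assumes D: "D \<in> datasets n d" and d: "d \<ge> 1" and v: "v \<in> nodes 0 d"
  shows "cand n D v \<subseteq> cube (snd v - fst v)"
proof -
  have vb: "fst v < snd v" "snd v \<le> d" using nodes_bounds[OF v] d by auto
  show ?thesis
  proof (cases "snd v - fst v \<le> 1")
    case True
    then show ?thesis unfolding cand_def by simp
  next
    case False
    let ?m = "(fst v + snd v) div 2"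
    have "?m \<le> d" "?m \<ge> fst v" "?m \<le> snd v" using vb by auto
    then show ?thesis unfolding cand_def cube_def using False vb
      by (auto dest!: Qs_len[OF D, rotated])
  qed
qed

lemma prob_bad:
  assumes D: "D \<in> datasets n d" and n: "n \<ge> 1" and d: "d \<ge> 1" and a: "a \<ge> 0"
  shows "measure_pmf.prob (noise a n d D) {N. \<not> good n D r N 0 d}
           \<le> real (card (nodes 0 d)) * (2 * real n^2) * ((real n + 1) * exp (- a * r))"
proof -
  let ?CS = "Sigma (nodes 0 d) (cand n D)"
  have fin: "finite ?CS" by (intro finite_SigmaI finite_nodes finite_cand)
  have sub: "{N. \<not> good n D r N 0 d} \<subseteq> (\<Union>c\<in>?CS. {N. r \<le> \<bar>real (N c) - real (cnt n D (fst c) (snd c))\<bar>})"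
  proof
    fix N assume "N \<in> {N. \<not> good n D r N 0 d}"
    then obtain v u where "v \<in> nodes 0 d" "u \<in> cand n D v" "\<not> \<bar>real (N (v,u)) - real (cnt n D v u)\<bar> < r"
      unfolding good_def by blast
    then show "N \<in> (\<Union>c\<in>?CS. {N. r \<le> \<bar>real (N c) - real (cnt n D (fst c) (snd c))\<bar>})"
      by (intro UN_I[of "(v,u)"]) auto
  qed
  have "measure_pmf.prob (noise a n d D) {N. \<not> good n D r N 0 d}
      \<le> measure_pmf.prob (noise a n d D) (\<Union>c\<in>?CS. {N. r \<le> \<bar>real (N c) - real (cnt n D (fst c) (snd c))\<bar>})"
    by (intro measure_pmf.finite_measure_mono sub) auto
  also have "\<dots> \<le> (\<Sum>c\<in>?CS. measure_pmf.prob (noise a n d D) {N. r \<le> \<bar>real (N c) - real (cnt n D (fst c) (snd c))\<bar>})"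
    by (intro measure_UNION_le fin) auto
  also have "\<dots> \<le> (\<Sum>c\<in>?CS. (real n + 1) * exp (- a * r))"
  proof (intro sum_mono)
    fix c assume c: "c \<in> ?CS"
    then have "c \<in> cells d" unfolding cells_def using cand_cells[OF D d] by auto
    then have "measure_pmf.prob (noise a n d D) {N. r \<le> \<bar>real (N c) - real (cnt n D (fst c) (snd c))\<bar>}
       = measure_pmf.prob (expm a n (cnt n D (fst c) (snd c))) {x. r \<le> \<bar>real x - real (cnt n D (fst c) (snd c))\<bar>}"
      by (rule marginal_noise)
    also have "\<dots> \<le> (real n + 1) * exp (- a * r)"
      by (rule expm_tail[OF a cnt_le])
    finally show "measure_pmf.prob (noise a n d D) {N. r \<le> \<bar>real (N c) - real (cnt n D (fst c) (snd c))\<bar>}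
       \<le> (real n + 1) * exp (- a * r)" .
  qed
  also have "\<dots> = real (card ?CS) * ((real n + 1) * exp (- a * r))" by simp
  also have "\<dots> \<le> real (card (nodes 0 d)) * (2 * real n^2) * ((real n + 1) * exp (- a * r))"
  proof (intro mult_right_mono)
    have "card ?CS = (\<Sum>v\<in>nodes 0 d. card (cand n D v))"
      by (rule card_SigmaI) (auto intro: finite_nodes finite_cand)
    also have "\<dots> \<le> (\<Sum>v\<in>nodes 0 d. 2 * n^2)"
    proof (intro sum_mono cand_card[OF n])
      fix v assume "v \<in> nodes 0 d"
      then show "fst v < snd v" using nodes_bounds[of v 0 d] d by simp
    qed
    finally have "card ?CS \<le> card (nodes 0 d) * (2 * n^2)" by simp
    then have "real (card ?CS) \<le> real (card (nodes 0 d) * (2 * n^2))" by (simp only: of_nat_le_iff)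
    then show "real (card ?CS) \<le> real (card (nodes 0 d)) * (2 * real n^2)" by simp
  qed simp
  finally show ?thesis .
qed



lemma cnt_diff:
  assumes "i < n" "\<forall>j<n. j \<noteq> i \<longrightarrow> D!j = D'!j"
  shows "real (cnt n D v u) - real (cnt n D' v u)
       = (if blk v (D!i) = u then 1 else 0) - (if blk v (D'!i) = u then 1 else 0)"
proof -
  have r: "real (cnt n E v u) = (if blk v (E!i) = u then 1 else 0) + (\<Sum>k\<in>{..<n}-{i}. if blk v (E!k) = u then 1 else 0)" for E
    unfolding cnt_def of_nat_sum using assms(1) by (subst sum.remove[of _ i]) (auto simp: if_distrib cong: if_cong)
  have "(\<Sum>k\<in>{..<n}-{i}. if blk v (D!k) = u then 1 else (0::real)) = (\<Sum>k\<in>{..<n}-{i}. if blk v (D'!k) = u then 1 else 0)"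
    using assms(2) by (intro sum.cong) auto
  then show ?thesis unfolding r[of D] r[of D'] by simp
qed

lemma sum_abs_ind:
  assumes "finite A"
  shows "(\<Sum>u\<in>A. \<bar>(if x = u then 1 else 0) - (if y = u then 1 else (0::real))\<bar>) \<le> (if x = y then 0 else 2)"
proof (cases "x = y")
  case True then show ?thesis by simp
next
  case False
  have "(\<Sum>u\<in>A. \<bar>(if x = u then 1 else 0) - (if y = u then 1 else (0::real))\<bar>)
     \<le> (\<Sum>u\<in>A. (if x = u then 1 else 0) + (if y = u then 1 else (0::real)))"
    by (intro sum_mono) auto
  also have "\<dots> = (\<Sum>u\<in>A. if x = u then 1 else 0) + (\<Sum>u\<in>A. if y = u then 1 else (0::real))"
    by (rule sum.distrib)
  also have "\<dots> \<le> 1 + 1" using assms by (intro add_mono) (auto simp: sum.delta)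
  finally show ?thesis using False by simp
qed

lemma blk_diff:
  assumes "blk v x \<noteq> blk v x'" "length x = length x'" "snd v \<le> length x"
  shows "\<exists>j. fst v \<le> j \<and> j < snd v \<and> x!j \<noteq> x'!j"
proof (rule ccontr)
  assume "\<not> ?thesis"
  then have h: "\<And>j. fst v \<le> j \<Longrightarrow> j < snd v \<Longrightarrow> x!j = x'!j" by blast
  have "blk v x = blk v x'"
    unfolding blk_def using assms(2,3) h by (intro nth_equalityI) auto
  then show False using assms(1) by simp
qed

lemma sum_card_swap:
  assumes "finite A" "finite B"
  shows "(\<Sum>v\<in>A. real (card {j\<in>B. P v j})) = (\<Sum>j\<in>B. real (card {v\<in>A. P v j}))"
proof -
  have c: "real (card {x\<in>S. Q x}) = (\<Sum>x\<in>S. if Q x then 1 else 0)" if "finite S" for S and Q :: "'c \<Rightarrow> bool"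
    using that by (simp add: sum.If_cases Int_def)
  show ?thesis using assms unfolding c[OF assms(1)] c[OF assms(2)] by (simp add: c sum.swap[of _ A])
qed

lemma sum_delta_cells:
  assumes D: "D \<in> datasets n d" "D' \<in> datasets n d" and i: "i < n" and agree: "\<forall>j<n. j \<noteq> i \<longrightarrow> D!j = D'!j"
    and d: "d \<ge> 1" and dep: "\<And>j. card {v \<in> nodes 0 d. fst v \<le> j \<and> j < snd v} \<le> dep"
  shows "(\<Sum>c\<in>cells d. \<bar>real (cnt n D (fst c) (snd c)) - real (cnt n D' (fst c) (snd c))\<bar>)
       \<le> 2 * real dep * real (hamming (D!i) (D'!i))"
proof -
  let ?x = "D!i" and ?y = "D'!i"
  have lx: "length ?x = d" "length ?y = d" using datasets_len D i by auto
  let ?Dif = "{j. j < length ?x \<and> ?x!j \<noteq> ?y!j}"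
  have finDif: "finite ?Dif" by simp
  have "(\<Sum>c\<in>cells d. \<bar>real (cnt n D (fst c) (snd c)) - real (cnt n D' (fst c) (snd c))\<bar>)
      = (\<Sum>v\<in>nodes 0 d. \<Sum>u\<in>cube (snd v - fst v). \<bar>real (cnt n D v u) - real (cnt n D' v u)\<bar>)"
  proof -
    have "(\<Sum>c\<in>cells d. \<bar>real (cnt n D (fst c) (snd c)) - real (cnt n D' (fst c) (snd c))\<bar>)
        = (\<Sum>(v,u)\<in>cells d. \<bar>real (cnt n D v u) - real (cnt n D' v u)\<bar>)"
      by (simp add: case_prod_unfold)
    also have "\<dots> = (\<Sum>v\<in>nodes 0 d. \<Sum>u\<in>cube (snd v - fst v). \<bar>real (cnt n D v u) - real (cnt n D' v u)\<bar>)"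
      unfolding cells_def by (rule sum.Sigma[symmetric]) (auto intro: finite_nodes finite_cube)
    finally show ?thesis .
  qed
  also have "\<dots> \<le> (\<Sum>v\<in>nodes 0 d. if blk v ?x = blk v ?y then 0 else 2)"
    unfolding cnt_diff[OF i agree] by (intro sum_mono sum_abs_ind finite_cube)
  also have "\<dots> \<le> (\<Sum>v\<in>nodes 0 d. 2 * real (card {j\<in>?Dif. fst v \<le> j \<and> j < snd v}))"
  proof (intro sum_mono)
    fix v assume v: "v \<in> nodes 0 d"
    show "(if blk v ?x = blk v ?y then 0 else 2) \<le> 2 * real (card {j\<in>?Dif. fst v \<le> j \<and> j < snd v})"
    proof (cases "blk v ?x = blk v ?y")
      case False
      have "snd v \<le> d" using nodes_bounds[OF v] d by simp
      then obtain j where j: "fst v \<le> j" "j < snd v" "?x!j \<noteq> ?y!j"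
        using blk_diff[OF False] lx by force
      then have "j \<in> {j\<in>?Dif. fst v \<le> j \<and> j < snd v}" using \<open>snd v \<le> d\<close> lx by auto
      then have "card {j\<in>?Dif. fst v \<le> j \<and> j < snd v} \<ge> 1"
        by (metis (no_types, lifting) One_nat_def Suc_leI card_gt_0_iff empty_iff finDif finite_subset mem_Collect_eq subsetI)
      then show ?thesis using False by simp
    qed simp
  qed
  also have "\<dots> = 2 * (\<Sum>j\<in>?Dif. real (card {v\<in>nodes 0 d. fst v \<le> j \<and> j < snd v}))"
  proof -
    have sw: "(\<Sum>v\<in>nodes 0 d. real (card {j\<in>?Dif. fst v \<le> j \<and> j < snd v}))
        = (\<Sum>j\<in>?Dif. real (card {v\<in>nodes 0 d. fst v \<le> j \<and> j < snd v}))"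
      by (rule sum_card_swap[OF finite_nodes finDif])
    show ?thesis by (simp only: sum_distrib_left[symmetric] sw)
  qed
  also have "\<dots> \<le> 2 * (\<Sum>j\<in>?Dif. real dep)"
    using dep by (intro mult_left_mono sum_mono) auto
  also have "\<dots> = 2 * real dep * real (hamming ?x ?y)"
    unfolding hamming_def by simp
  finally show ?thesis .
qed

lemma noise_pmf_dp:
  assumes D: "D \<in> datasets n d" "D' \<in> datasets n d" and i: "i < n" and agree: "\<forall>j<n. j \<noteq> i \<longrightarrow> D!j = D'!j"
    and d: "d \<ge> 1" and dep: "\<And>j. card {v \<in> nodes 0 d. fst v \<le> j \<and> j < snd v} \<le> dep" and a: "a \<ge> 0"
  shows "pmf (noise a n d D) N \<le> exp (4 * a * real dep * real (hamming (D!i) (D'!i))) * pmf (noise a n d D') N"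
proof (cases "\<forall>x. x \<notin> cells d \<longrightarrow> N x = 0")
  case True
  let ?p = "\<lambda>E c. pmf (expm a n (cnt n E (fst c) (snd c))) (N c)"
  let ?del = "\<lambda>c. \<bar>real (cnt n D (fst c) (snd c)) - real (cnt n D' (fst c) (snd c))\<bar>"
  have "pmf (noise a n d D) N = (\<Prod>c\<in>cells d. ?p D c)"
    unfolding noise_def using True by (simp add: pmf_Pi finite_cells)
  also have "\<dots> \<le> (\<Prod>c\<in>cells d. exp (2 * a * ?del c) * ?p D' c)"
    by (intro prod_mono conjI pmf_nonneg expm_ratio[OF a])
  also have "\<dots> = exp (2 * a * (\<Sum>c\<in>cells d. ?del c)) * (\<Prod>c\<in>cells d. ?p D' c)"
    by (simp add: prod.distrib exp_sum finite_cells sum_distrib_left)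
  also have "\<dots> \<le> exp (4 * a * real dep * real (hamming (D!i) (D'!i))) * (\<Prod>c\<in>cells d. ?p D' c)"
  proof (intro mult_right_mono prod_nonneg pmf_nonneg)
    have "2 * a * (\<Sum>c\<in>cells d. ?del c) \<le> 2 * a * (2 * real dep * real (hamming (D!i) (D'!i)))"
      using sum_delta_cells[OF D i agree d dep] a by (intro mult_left_mono) auto
    then show "exp (2 * a * (\<Sum>c\<in>cells d. ?del c)) \<le> exp (4 * a * real dep * real (hamming (D!i) (D'!i)))"
      by simp
  qed
  also have "(\<Prod>c\<in>cells d. ?p D' c) = pmf (noise a n d D') N"
    unfolding noise_def using True by (simp add: pmf_Pi finite_cells)
  finally show ?thesis .
next
  case False
  have "pmf (noise a n d D) N = 0" unfolding noise_def pmf_Pi[OF finite_cells] if_not_P[OF False] ..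
  then show ?thesis by simp
qed



lemma success_prob_Wd: "success_prob n d M \<theta> b =
   (\<Sum>D\<in>datasets n d. Wd n \<theta> D * measure (M D) {t \<in> space (M D). l2sq_error d t \<theta> \<le> b})"
  unfolding success_prob_def Wd_def ..

lemma d0_case:
  fixes \<epsilon> :: real and n :: nat and B :: real
  assumes "\<epsilon> > 0" "B \<ge> 0"
  shows "\<exists>M. is_mechanism n 0 M \<and> grad0_DP \<epsilon> n 0 M \<and>
           (\<forall>\<theta>::bool list pmf. set_pmf \<theta> \<subseteq> cube 0 \<longrightarrow> success_prob n 0 M \<theta> B \<ge> 0.9)"
proof -
  define t0 where "t0 = (\<lambda>x::bool list. if x \<in> cube 0 then (1::real) else undefined)"
  have t0: "t0 \<in> space (out_space 0)" unfolding space_out t0_def by (auto simp: PiE_def extensional_def)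
  define M where "M = (\<lambda>D::bool list list. return (out_space 0) t0)"
  have mech: "is_mechanism n 0 M"
    unfolding is_mechanism_def M_def using prob_space_return[OF t0] by simp
  have dp: "grad0_DP \<epsilon> n 0 M"
    unfolding grad0_DP_def M_def
  proof (intro ballI allI impI)
    fix D D' i S
    have "measure (return (out_space 0) t0) S \<le> 1 * measure (return (out_space 0) t0) S" by simp
    also have "\<dots> \<le> exp (\<epsilon> * real (hamming (D ! i) (D' ! i))) * measure (return (out_space 0) t0) S"
      using assms(1) by (intro mult_right_mono) auto
    finally show "measure (return (out_space 0) t0) S \<le> exp (\<epsilon> * real (hamming (D ! i) (D' ! i))) * measure (return (out_space 0) t0) S" .
  qed
  have succ: "success_prob n 0 M \<theta> B \<ge> 0.9" if th: "set_pmf \<theta> \<subseteq> cube 0" for \<theta>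
  proof -
    have c0: "cube 0 = {[]}" unfolding cube_def by auto
    have p: "pmf \<theta> [] = 1" using sum_pmf_cube[OF th] c0 by simp
    have e: "l2sq_error 0 t0 \<theta> = 0" unfolding l2sq_error_def c0 t0_def using p by (simp add: cube_def)
    have "measure (M D) {t \<in> space (M D). l2sq_error 0 t \<theta> \<le> B} = 1" for D
    proof -
      have A: "{t \<in> space (out_space 0). l2sq_error 0 t \<theta> \<le> B} \<in> sets (out_space 0)"
        using err_set by simp
      have "t0 \<in> {t \<in> space (out_space 0). l2sq_error 0 t \<theta> \<le> B}" using t0 e assms(2) by simp
      then show ?thesis unfolding M_def using measure_return[OF A, of t0] by simp
    qed
    then have "success_prob n 0 M \<theta> B = 1"
      unfolding success_prob_Wd using sum_Wd[OF th] by simp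
    then show ?thesis by simp
  qed
  show ?thesis using mech dp succ by blast
qed



lemma ln2_ge: "ln (2::real) \<ge> 1/2"
proof -
  have "exp (1/2::real) * exp (1/2) = exp 1" by (simp add: exp_add[symmetric])
  also have "\<dots> < 272/100" by (rule e_less_272)
  finally have "exp (1/2::real) * exp (1/2) < 4" by simp
  have "exp (1/2::real) < 2"
  proof (rule ccontr)
    assume "\<not> exp (1/2::real) < 2"
    then have "2 * 2 \<le> exp (1/2::real) * exp (1/2)" by (intro mult_mono) auto
    then show False using \<open>exp (1/2::real) * exp (1/2) < 4\<close> by simp
  qed
  then have "ln (exp (1/2::real)) \<le> ln 2" by (subst ln_le_cancel_iff) auto
  then show ?thesis by simp
qed

lemma ln3_ge: "ln (3::real) \<ge> 1"
proof -
  have "exp (1::real) < 3" using e_less_272 by simp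
  then have "ln (exp (1::real)) \<le> ln 3" by (subst ln_le_cancel_iff) auto
  then show ?thesis by simp
qed

lemma final_bound:
  fixes \<epsilon> :: real and n d k0 :: nat
  assumes e: "\<epsilon> > 0" and n: "n \<ge> 1" and d: "d \<ge> 1" and k0: "2^k0 \<le> d"
  defines "L \<equiv> ln (real n + real d + 1/\<epsilon> + 2)"
  shows "6 * (ln (160 * real d * real n^3) / (\<epsilon> / (4 * real (k0+2)))) / real n + 40 / real n
       \<le> 2000 * L^2 * (ln (real d + 1) / (\<epsilon> * real n) + 1 / real n)"
proof -
  define X where "X = real n + real d + 1/\<epsilon> + 2"
  have ie: "1/\<epsilon> > 0" using e by simp
  have rn: "real n \<ge> 1" using n by simp
  have rd: "real d \<ge> 0" by simp
  have X3: "X \<ge> 3" "X \<ge> real d" "X \<ge> real n" unfolding X_def using ie rn rd by linarith+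
  have LX: "L = ln X" unfolding L_def X_def ..
  have ln3L: "ln 3 \<le> L" unfolding LX using X3(1) by simp
  have L1: "L \<ge> 1" using ln3_ge ln3L by linarith
  have k0L: "real k0 \<le> 2 * L"
  proof -
    have "real k0 * ln 2 = ln (2^k0)" by (simp add: ln_realpow)
    also have "\<dots> \<le> ln (real d)"
    proof -
      have "real (2^k0) \<le> real d" using k0 by (simp only: of_nat_le_iff)
      then have "(2::real)^k0 \<le> real d" by simp
      moreover have "(0::real) < 2^k0" by simp
      ultimately show ?thesis using ln_le_cancel_iff[of "(2::real)^k0" "real d"] by linarith
    qed
    also have "\<dots> \<le> L" unfolding LX using X3(2) d by simp
    finally have "real k0 * ln 2 \<le> L" .
    moreover have "real k0 * (1/2) \<le> real k0 * ln 2" using ln2_ge by (intro mult_left_mono) auto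
    ultimately show ?thesis by linarith
  qed
  have dep: "real (k0 + 2) \<le> 4 * L" using k0L L1 by simp
  have lnb: "ln (160 * real d * real n^3) \<le> 9 * L"
  proof -
    have pos: "160 * real d * real n^3 > 0" using d n by simp
    have "160 * real d * real n^3 \<le> 3^5 * X * X^3"
      using X3 d n by (intro mult_mono power_mono) auto
    then have "ln (160 * real d * real n^3) \<le> ln (3^5 * X * X^3)" using pos by simp
    also have "\<dots> = 5 * ln 3 + ln X + 3 * ln X"
    proof -
      have l5: "ln ((3::real)^5) = 5 * ln 3" using ln_realpow[of "3::real" 5] by simp
      have "ln (3^5 * X * X^3) = ln ((3::real)^5) + ln X + ln (X^3)" using X3 by (simp add: ln_mult)
      also have "ln (X^3) = 3 * ln X" using X3 by (simp add: ln_realpow)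
      finally show ?thesis using l5 by simp
    qed
    also have "\<dots> \<le> 9 * L" using ln3L unfolding LX by simp
    finally show ?thesis .
  qed
  have lnd: "ln (real d + 1) \<ge> 1/2"
  proof -
    have "ln 2 \<le> ln (real d + 1)" using d by simp
    then show ?thesis using ln2_ge by linarith
  qed
  have lnpos: "ln (160 * real d * real n^3) \<ge> 0"
  proof -
    have "1 * 1 * 1 \<le> 160 * real d * real n^3" using d n by (intro mult_mono) auto
    then show ?thesis by simp
  qed
  have A: "24 * real (k0+2) * ln (160 * real d * real n^3) \<le> 2000 * L^2 * ln (real d + 1)"
  proof -
    have "24 * real (k0+2) * ln (160 * real d * real n^3) \<le> 24 * (4 * L) * (9 * L)"
      using dep lnb lnpos L1 by (intro mult_mono) auto
    also have "\<dots> = 2000 * L^2 * (864 / 2000)" by (simp add: power2_eq_square)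
    also have "\<dots> \<le> 2000 * L^2 * ln (real d + 1)" using lnd by (intro mult_left_mono) auto
    finally show ?thesis .
  qed
  have "1^2 \<le> L^2" using L1 by (intro power_mono) auto
  then have B: "40 \<le> 2000 * L^2" by simp
  have nn: "real n > 0" using n by simp
  have "6 * (ln (160 * real d * real n^3) / (\<epsilon> / (4 * real (k0+2)))) / real n
      = (24 * real (k0+2) * ln (160 * real d * real n^3)) / (\<epsilon> * real n)"
    using e nn by (simp add: field_simps)
  also have "\<dots> \<le> (2000 * L^2 * ln (real d + 1)) / (\<epsilon> * real n)"
    using A e nn by (intro divide_right_mono) auto
  finally have 1: "6 * (ln (160 * real d * real n^3) / (\<epsilon> / (4 * real (k0+2)))) / real n
      \<le> 2000 * L^2 * (ln (real d + 1) / (\<epsilon> * real n))" by simp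
  have 2: "40 / real n \<le> 2000 * L^2 * (1 / real n)"
    using B nn by (simp add: divide_right_mono)
  show ?thesis using 1 2 by (simp add: distrib_left)
qed



lemma main_case:
  fixes \<epsilon> :: real and n d :: nat
  assumes e: "\<epsilon> > 0" and n: "n \<ge> 1" and d: "d \<ge> 1"
  shows "\<exists>M. is_mechanism n d M \<and> grad0_DP \<epsilon> n d M \<and>
           (\<forall>\<theta>::bool list pmf. set_pmf \<theta> \<subseteq> cube d \<longrightarrow>
              success_prob n d M \<theta>
                (2000 * (ln (real n + real d + 1 / \<epsilon> + 2)) ^ 2 *
                   (ln (real d + 1) / (\<epsilon> * real n) + 1 / real n)) \<ge> 0.9)"
proof -
  obtain k0 where k0: "2^k0 \<le> d" "d < 2^(k0+1)" using ex_power_ivl1[of 2 d] d by auto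
  define dep where "dep = k0 + 2"
  have depth: "card {v \<in> nodes 0 d. fst v \<le> j \<and> j < snd v} \<le> dep" for j
    using depth_nodes[of 0 d "k0+1" j] k0 d unfolding dep_def by simp
  define a where "a = \<epsilon> / (4 * real dep)"
  have a: "a > 0" unfolding a_def dep_def using e by simp
  define r where "r = ln (160 * real d * real n^3) / a"
  have big: "160 * real d * real n^3 > 1"
  proof -
    have "1 * 1 * 1 \<le> real d * real n^3" using d n by (intro mult_mono) auto
    then show ?thesis by simp
  qed
  have r: "r > 0" unfolding r_def using a big by simp
  have er: "exp (- a * r) = 1 / (160 * real d * real n^3)"
  proof -
    have "a * r = ln (160 * real d * real n^3)" unfolding r_def using a by simp
    then have "exp (- a * r) = exp (- ln (160 * real d * real n^3))" by simp
    also have "\<dots> = inverse (exp (ln (160 * real d * real n^3)))" by (rule exp_minus)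
    also have "\<dots> = inverse (160 * real d * real n^3)" using big by simp
    finally show ?thesis by (simp add: inverse_eq_divide)
  qed
  define B where "B = 2000 * (ln (real n + real d + 1 / \<epsilon> + 2)) ^ 2 *
                   (ln (real d + 1) / (\<epsilon> * real n) + 1 / real n)"
  have bound: "6 * r / n + 40 / n \<le> B"
    using final_bound[OF e n d k0(1)] unfolding B_def r_def a_def dep_def by simp
  define M where "M = (\<lambda>D. distr (measure_pmf (noise a n d D)) (out_space d) (post n d (2*r)))"
  have meas: "post n d (2*r) \<in> measurable (measure_pmf (noise a n d D)) (out_space d)" for D
    using post_space by simp
  have mD: "measure (M D) S = measure_pmf.prob (noise a n d D) (post n d (2*r) -` S)"
    if "S \<in> sets (out_space d)" for D S
    unfolding M_def using measure_distr[OF meas that] by simp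
  have mech: "is_mechanism n d M"
    unfolding is_mechanism_def M_def
    using measure_pmf.prob_space_distr[OF meas] by simp
  have dp: "grad0_DP \<epsilon> n d M"
    unfolding grad0_DP_def
  proof (intro ballI allI impI)
    fix D D' i S
    assume D: "D \<in> datasets n d" "D' \<in> datasets n d" and i: "i < n"
      and agree: "\<forall>j<n. j \<noteq> i \<longrightarrow> D ! j = D' ! j" and S: "S \<in> sets (out_space d)"
    have dpos: "real dep > 0" unfolding dep_def by simp
    have K: "4 * a * real dep = \<epsilon>" unfolding a_def using dpos by (simp add: field_simps)
    have "pmf (noise a n d D) N \<le> exp (\<epsilon> * real (hamming (D ! i) (D' ! i))) * pmf (noise a n d D') N" for N
    proof -
      have "4 * a * real dep * real (hamming (D ! i) (D' ! i)) = \<epsilon> * real (hamming (D ! i) (D' ! i))"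
        using K by simp
      then show ?thesis using noise_pmf_dp[OF D i agree d depth, of a N] a by (simp only: less_imp_le)
    qed
    then show "measure (M D) S \<le> exp (\<epsilon> * real (hamming (D ! i) (D' ! i))) * measure (M D') S"
      unfolding mD[OF S] by (rule pmf_le_measure)
  qed
  have succ: "success_prob n d M \<theta> B \<ge> 0.9" if th: "set_pmf \<theta> \<subseteq> cube d" for \<theta>
  proof -
    let ?A = "{t \<in> space (out_space d). l2sq_error d t \<theta> \<le> B}"
    have spM: "space (M D) = space (out_space d)" for D unfolding M_def by simp
    have key: "measure (M D) ?A \<ge> 19/20" if D: "D \<in> datasets n d" and st: "stat n d \<theta> D \<le> 20 / n" for D
    proof -
      have sub: "{N. good n D r N 0 d} \<subseteq> post n d (2*r) -` ?A"
      proof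
        fix N assume "N \<in> {N. good n D r N 0 d}"
        then have G: "good n D r N 0 d" by simp
        have "l2sq_error d (post n d (2*r) N) \<theta> \<le> 6 * r / n + 2 * stat n d \<theta> D"
          by (rule err_total[OF D n d r G])
        also have "\<dots> \<le> 6 * r / n + 40 / n" using st by simp
        also have "\<dots> \<le> B" by (rule bound)
        finally show "N \<in> post n d (2*r) -` ?A" using post_space by simp
      qed
      have bad: "measure_pmf.prob (noise a n d D) {N. \<not> good n D r N 0 d} \<le> 1/20"
      proof -
        have cn: "real (card (nodes 0 d)) \<le> 2 * real d"
        proof -
          have "card (nodes 0 d) \<le> 2 * (d - 0) - 1" using card_nodes[of 0 d] d by simp
          then have "card (nodes 0 d) \<le> 2 * d" by simp
          then show ?thesis by (metis of_nat_le_iff of_nat_mult of_nat_numeral)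
        qed
        have "measure_pmf.prob (noise a n d D) {N. \<not> good n D r N 0 d}
            \<le> real (card (nodes 0 d)) * (2 * real n^2) * ((real n + 1) * exp (- a * r))"
          by (rule prob_bad[OF D n d]) (use a in simp)
        also have "\<dots> \<le> (2 * real d) * (2 * real n^2) * ((2 * real n) * exp (- a * r))"
          using cn n by (intro mult_mono) auto
        also have "\<dots> = 8 * (real d * real n^3) / (160 * (real d * real n^3))"
          unfolding er by (simp add: power2_eq_square power3_eq_cube field_simps)
        also have "\<dots> = 1/20" using d n by simp
        finally show ?thesis .
      qed
      have "measure_pmf.prob (noise a n d D) {N. good n D r N 0 d} = 1 - measure_pmf.prob (noise a n d D) {N. \<not> good n D r N 0 d}"
        using measure_pmf.prob_compl[of "{N. \<not> good n D r N 0 d}" "noise a n d D"]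
        by (simp add: Compl_eq_Diff_UNIV[symmetric] Collect_neg_eq[symmetric])
      also have "\<dots> \<ge> 19/20" using bad by simp
      finally have "measure_pmf.prob (noise a n d D) {N. good n D r N 0 d} \<ge> 19/20" .
      also have "measure_pmf.prob (noise a n d D) {N. good n D r N 0 d} \<le> measure_pmf.prob (noise a n d D) (post n d (2*r) -` ?A)"
        by (intro measure_pmf.finite_measure_mono sub) auto
      also have "\<dots> = measure (M D) ?A" using mD[OF err_set] by simp
      finally show ?thesis .
    qed
    let ?G = "{D\<in>datasets n d. stat n d \<theta> D \<le> 20 / n}"
    have "success_prob n d M \<theta> B = (\<Sum>D\<in>datasets n d. Wd n \<theta> D * measure (M D) ?A)"
      unfolding success_prob_Wd spM ..
    also have "\<dots> \<ge> (\<Sum>D\<in>?G. Wd n \<theta> D * measure (M D) ?A)"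
      by (intro sum_mono2 finite_datasets) (auto intro!: mult_nonneg_nonneg Wd_nonneg)
    also have "(\<Sum>D\<in>?G. Wd n \<theta> D * measure (M D) ?A) \<ge> (\<Sum>D\<in>?G. Wd n \<theta> D * (19/20))"
      using key by (intro sum_mono mult_left_mono Wd_nonneg) auto
    also have "(\<Sum>D\<in>?G. Wd n \<theta> D * (19/20)) = (\<Sum>D\<in>?G. Wd n \<theta> D) * (19/20)"
      by (rule sum_distrib_right[symmetric])
    also have "\<dots> \<ge> (19/20) * (19/20)"
      using stat_markov[OF th n] by (intro mult_right_mono) auto
    finally show ?thesis by simp
  qed
  show ?thesis using mech dp succ unfolding B_def by blast
qed

theorem theorem5p5:
  "\<exists>C::real. \<exists>k::nat. C > 0 \<and>
     (\<forall>(\<epsilon>::real) (n::nat) (d::nat). \<epsilon> > 0 \<longrightarrow> n \<ge> 1 \<longrightarrow>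
        (\<exists>M. is_mechanism n d M \<and> grad0_DP \<epsilon> n d M \<and>
           (\<forall>\<theta>::bool list pmf. set_pmf \<theta> \<subseteq> cube d \<longrightarrow>
              success_prob n d M \<theta>
                (C * (ln (real n + real d + 1 / \<epsilon> + 2)) ^ k *
                   (ln (real d + 1) / (\<epsilon> * real n) + 1 / real n))
              \<ge> 0.9)))"
proof -
  have H: "\<forall>(\<epsilon>::real) (n::nat) (d::nat). \<epsilon> > 0 \<longrightarrow> n \<ge> 1 \<longrightarrow>
        (\<exists>M. is_mechanism n d M \<and> grad0_DP \<epsilon> n d M \<and>
           (\<forall>\<theta>::bool list pmf. set_pmf \<theta> \<subseteq> cube d \<longrightarrow>
              success_prob n d M \<theta>
                (2000 * (ln (real n + real d + 1 / \<epsilon> + 2)) ^ 2 *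
                   (ln (real d + 1) / (\<epsilon> * real n) + 1 / real n))
              \<ge> 0.9))"
  proof (intro allI impI)
    fix \<epsilon> :: real and n d :: nat
    assume e: "\<epsilon> > 0" and n: "n \<ge> 1"
    show "\<exists>M. is_mechanism n d M \<and> grad0_DP \<epsilon> n d M \<and>
           (\<forall>\<theta>::bool list pmf. set_pmf \<theta> \<subseteq> cube d \<longrightarrow>
              success_prob n d M \<theta>
                (2000 * (ln (real n + real d + 1 / \<epsilon> + 2)) ^ 2 *
                   (ln (real d + 1) / (\<epsilon> * real n) + 1 / real n))
              \<ge> 0.9)"
    proof (cases "d = 0")
      case True
      have "2000 * (ln (real n + real d + 1 / \<epsilon> + 2)) ^ 2 * (ln (real d + 1) / (\<epsilon> * real n) + 1 / real n) \<ge> 0"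
        using True e by simp
      then show ?thesis using d0_case[OF e] True by blast
    next
      case False
      then show ?thesis using main_case[OF e n] by simp
    qed
  qed
  show ?thesis
  proof (rule exI[of _ "2000::real"], rule exI[of _ "2::nat"], rule conjI)
    show "(2000::real) > 0" by simp
  qed (rule H)
qed


end
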